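(* Let $G_{\mathrm{base}}$ be a forest on $L$ vertices with edge weights $W$, and let $f(z) = \exp(\tau(z))$ where $\tau(z) = az+b$ is an affine map ($a,b\in\mathbb{R}$). Then the mask $\mathbf{M} = [f(\mathrm{dist}_{G_{\mathrm{base}}}(i,j))]_{i,j=1,\dots,L}$ supports matrix-vector multiplication in time $O(L)$; in particular $(G_{\mathrm{base}},f)$ is tractable.
   Context: $\mathrm{dist}_{G_{\mathrm{base}}}(i,j)$ is the weighted shortest-path distance (sum of edge weights along the unique path) between $i$ and $j$. For vertices in different connected components of the forest the corresponding mask entries are taken to be $0$. A pair $(G_{\mathrm{base}},f)$ is tractable if $\mathbf{M}\mathbf{x}$ can be computed in $o(L^2)$ time for every $\mathbf{x}\in\mathbb{R}^L$. Time counts arithmetic operations, including evaluations of $\exp$. *)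

theory Defs
  imports Complex_Main
begin

definition walk_ok :: "nat set set \<Rightarrow> nat list \<Rightarrow> bool" where
  "walk_ok E p \<longleftrightarrow> (\<forall>k. Suc k < length p \<longrightarrow> {p ! k, p ! Suc k} \<in> E)"

definition is_path :: "nat set set \<Rightarrow> nat list \<Rightarrow> nat \<Rightarrow> nat \<Rightarrow> bool" where
  "is_path E p i j \<longleftrightarrow> p \<noteq> [] \<and> hd p = i \<and> last p = j \<and> distinct p \<and> walk_ok E p"

definition has_cycle :: "nat set set \<Rightarrow> bool" where
  "has_cycle E \<longleftrightarrow> (\<exists>c. length c \<ge> 3 \<and> distinct c \<and> walk_ok E c \<and> {last c, hd c} \<in> E)"

definition forest :: "nat \<Rightarrow> nat set set \<Rightarrow> bool" where
  "forest L E \<longleftrightarrow>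
     (\<forall>e\<in>E. \<exists>u v. e = {u, v} \<and> u \<noteq> v \<and> u < L \<and> v < L) \<and> \<not> has_cycle E"

definition path_weight :: "(nat set \<Rightarrow> real) \<Rightarrow> nat list \<Rightarrow> real" where
  "path_weight W p = (\<Sum>k<length p - 1. W {p ! k, p ! Suc k})"

text \<open>Weighted distance: weight of the unique simple path (forest).\<close>
definition fdist :: "nat set set \<Rightarrow> (nat set \<Rightarrow> real) \<Rightarrow> nat \<Rightarrow> nat \<Rightarrow> real" where
  "fdist E W i j = path_weight W (THE p. is_path E p i j)"

definition mask :: "real \<Rightarrow> real \<Rightarrow> nat set set \<Rightarrow> (nat set \<Rightarrow> real) \<Rightarrow> nat \<Rightarrow> nat \<Rightarrow> real" where
  "mask a b E W i j = (if \<exists>p. is_path E p i j then exp (a * fdist E W i j + b) else 0)"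

definition mask_mult :: "real \<Rightarrow> real \<Rightarrow> nat \<Rightarrow> nat set set \<Rightarrow> (nat set \<Rightarrow> real) \<Rightarrow> (nat \<Rightarrow> real) \<Rightarrow> nat \<Rightarrow> real" where
  "mask_mult a b L E W x i = (\<Sum>j<L. mask a b E W i j * x j)"

section \<open>Arithmetic straight-line programs (cost model: one unit per operation)\<close>

datatype instr =
    Const real
  | InX nat
  | InW "nat set"
  | Add nat nat
  | Sub nat nat
  | Mul nat nat
  | Dv nat nat
  | Ex nat

definition reg :: "real list \<Rightarrow> nat \<Rightarrow> real" where
  "reg rs k = (if k < length rs then rs ! k else 0)"

fun exec_instr :: "(nat \<Rightarrow> real) \<Rightarrow> (nat set \<Rightarrow> real) \<Rightarrow> real list \<Rightarrow> instr \<Rightarrow> real" where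
  "exec_instr x W rs (Const c) = c"
| "exec_instr x W rs (InX i) = x i"
| "exec_instr x W rs (InW e) = W e"
| "exec_instr x W rs (Add k l) = reg rs k + reg rs l"
| "exec_instr x W rs (Sub k l) = reg rs k - reg rs l"
| "exec_instr x W rs (Mul k l) = reg rs k * reg rs l"
| "exec_instr x W rs (Dv k l) = reg rs k / reg rs l"
| "exec_instr x W rs (Ex k) = exp (reg rs k)"

definition run :: "instr list \<Rightarrow> (nat \<Rightarrow> real) \<Rightarrow> (nat set \<Rightarrow> real) \<Rightarrow> real list" where
  "run P x W = foldl (\<lambda>rs ins. rs @ [exec_instr x W rs ins]) [] P"

definition computes_mask_mult ::
  "real \<Rightarrow> real \<Rightarrow> nat \<Rightarrow> nat set set \<Rightarrow> instr list \<Rightarrow> nat list \<Rightarrow> bool" where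
  "computes_mask_mult a b L E P outs \<longleftrightarrow> length outs = L \<and>
     (\<forall>W x. \<forall>i<L. reg (run P x W) (outs ! i) = mask_mult a b L E W x i)"

end

theory Submission
  imports Defs
begin


lemma walk_ok_mono: "walk_ok E q \<Longrightarrow> E \<subseteq> F \<Longrightarrow> walk_ok F q"
  unfolding walk_ok_def by blast

lemma walk_ok_short: "length q \<le> 1 \<Longrightarrow> walk_ok E q"
  unfolding walk_ok_def by auto

lemma walk_ok_empty: "walk_ok {} q \<Longrightarrow> length q \<le> 1"
  unfolding walk_ok_def by (cases q) auto

lemma walk_ok_mem:
  assumes "walk_ok E q" "2 \<le> length q" "v \<in> set q"
  shows "\<exists>e\<in>E. v \<in> e"
proof -
  obtain k where k: "k < length q" "q ! k = v" using assms(3) by (auto simp: in_set_conv_nth)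
  show ?thesis
  proof (cases "Suc k < length q")
    case True
    then have "{q ! k, q ! Suc k} \<in> E" using assms(1) unfolding walk_ok_def by blast
    then show ?thesis using k by blast
  next
    case False
    then have kk: "Suc (k - 1) < length q" "Suc (k - 1) = k" using k assms(2) by auto
    then have "{q ! (k - 1), q ! Suc (k - 1)} \<in> E" using assms(1) unfolding walk_ok_def by blast
    then show ?thesis using k kk by auto
  qed
qed

lemma walk_ok_snoc:
  assumes "walk_ok E q" "q \<noteq> []" "{last q, v} \<in> E"
  shows "walk_ok E (q @ [v])"
  unfolding walk_ok_def
proof (intro allI impI)
  fix k assume k: "Suc k < length (q @ [v])"
  show "{(q @ [v]) ! k, (q @ [v]) ! Suc k} \<in> E"
  proof (cases "Suc k < length q")
    case True
    then show ?thesis using assms(1) by (simp add: nth_append walk_ok_def)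
  next
    case False
    then have "k = length q - 1" "Suc k = length q" using k by auto
    then show ?thesis using assms(2,3) by (simp add: nth_append last_conv_nth)
  qed
qed

lemma walk_ok_take: "walk_ok E q \<Longrightarrow> walk_ok E (take m q)"
  unfolding walk_ok_def by auto

lemma walk_ok_drop: "walk_ok E q \<Longrightarrow> walk_ok E (drop m q)"
  unfolding walk_ok_def by auto

lemma walk_ok_rev1:
  assumes "walk_ok E q" shows "walk_ok E (rev q)"
  unfolding walk_ok_def
proof (intro allI impI)
  fix k assume k: "Suc k < length (rev q)"
  define m where "m = length q - Suc (Suc k)"
  have m: "Suc m < length q" "Suc m = length q - Suc k" using k by (auto simp: m_def)
  have "{q ! m, q ! Suc m} \<in> E" using assms m(1) unfolding walk_ok_def by blast
  moreover have "rev q ! k = q ! Suc m" "rev q ! Suc k = q ! m"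
    using k m by (auto simp: rev_nth m_def)
  ultimately show "{rev q ! k, rev q ! Suc k} \<in> E" by (simp add: insert_commute)
qed

lemma walk_ok_rev: "walk_ok E (rev q) = walk_ok E q"
  using walk_ok_rev1[of E q] walk_ok_rev1[of E "rev q"] by auto

lemma is_path_rev: "is_path E (rev q) j i = is_path E q i j"
  unfolding is_path_def by (auto simp: walk_ok_rev hd_rev last_rev)

lemma is_path_same:
  assumes "is_path E q i i" shows "q = [i]"
proof -
  have q: "q \<noteq> []" "hd q = i" "last q = i" "distinct q" using assms by (auto simp: is_path_def)
  have "length q = 1"
  proof (rule ccontr)
    assume "length q \<noteq> 1"
    then have "2 \<le> length q" using q(1) by (cases q) (auto simp: Suc_le_eq)
    then have "q ! 0 = q ! (length q - 1)" using q by (simp add: hd_conv_nth last_conv_nth)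
    moreover have "0 < length q" "length q - 1 < length q" using \<open>2 \<le> length q\<close> by auto
    ultimately have "(0::nat) = length q - 1" using q(4) nth_eq_iff_index_eq by blast
    then show False using \<open>2 \<le> length q\<close> by simp
  qed
  then show ?thesis using q by (cases q) auto
qed

lemma is_path_single: "is_path E [i] i i"
  by (simp add: is_path_def walk_ok_short)

lemma is_path_empty: "is_path {} q i j \<Longrightarrow> q = [i] \<and> j = i"
  unfolding is_path_def
  by (cases q) (auto dest!: walk_ok_empty)

definition uniq :: "nat set set \<Rightarrow> bool" where
  "uniq E \<longleftrightarrow> (\<forall>q1 q2 i j. is_path E q1 i j \<longrightarrow> is_path E q2 i j \<longrightarrow> q1 = q2)"

lemma forest_remove: "forest L E \<Longrightarrow> forest L (E - {e})"
  unfolding forest_def has_cycle_def by (auto dest: walk_ok_mono[of _ _ E])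

lemma forest_finite: assumes "forest L E" shows "finite E" "\<Union>E \<subseteq> {..<L}"
proof -
  have "E \<subseteq> (\<lambda>(u,v). {u,v}) ` ({..<L} \<times> {..<L})"
    using assms unfolding forest_def by fastforce
  then show "finite E" by (rule finite_subset) auto
  show "\<Union>E \<subseteq> {..<L}" using assms unfolding forest_def by fastforce
qed

lemma forest_leaf:
  assumes F: "forest L E" and ne: "E \<noteq> {}"
  shows "\<exists>l p. {l,p} \<in> E \<and> l \<noteq> p \<and> l < L \<and> p < L \<and> (\<forall>e\<in>E. l \<in> e \<longrightarrow> e = {l,p})"
proof -
  define P where "P q \<longleftrightarrow> distinct q \<and> walk_ok E q \<and> set q \<subseteq> {..<L} \<and> 2 \<le> length q" for q
  obtain e0 where "e0 \<in> E" using ne by blast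
  then obtain u v where uv: "e0 = {u,v}" "u \<noteq> v" "u < L" "v < L"
    using F unfolding forest_def by blast
  then have uv: "{u,v} \<in> E" "u \<noteq> v" "u < L" "v < L" using \<open>e0 \<in> E\<close> by auto
  have P0: "P [u,v]" using uv unfolding P_def walk_ok_def by (auto simp: less_Suc_eq)
  have bnd: "length q \<le> L" if "P q" for q
  proof -
    have "length q = card (set q)" using that by (simp add: P_def distinct_card)
    also have "\<dots> \<le> card {..<L}" using that by (intro card_mono) (auto simp: P_def)
    finally show ?thesis by simp
  qed
  define S where "S = {length q | q. P q}"
  have "S \<subseteq> {..L}" using bnd unfolding S_def by auto
  then have fS: "finite S" using finite_subset by blast
  have neS: "S \<noteq> {}" using P0 unfolding S_def by blast
  obtain q where Pq: "P q" and lq: "length q = Max S"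
    using Max_in[OF fS neS] unfolding S_def by force
  have maxq: "length q' \<le> length q" if "P q'" for q'
  proof -
    have "length q' \<in> S" using that unfolding S_def by blast
    then show ?thesis using lq Max_ge[OF fS] by simp
  qed
  define n where "n = length q"
  have n2: "2 \<le> n" using Pq by (simp add: P_def n_def)
  define l where "l = q ! (n - 1)"
  define pr where "pr = q ! (n - 2)"
  have lastq: "last q = l" using n2 unfolding l_def n_def by (subst last_conv_nth) auto
  have e1: "{pr, l} \<in> E"
  proof -
    have "Suc (n - 2) < length q" "Suc (n-2) = n - 1" using n2 by (auto simp: n_def)
    then show ?thesis using Pq unfolding P_def walk_ok_def pr_def l_def by metis
  qed
  have dq: "distinct q" using Pq by (simp add: P_def)
  have lpr: "l \<noteq> pr" using dq n2 unfolding l_def pr_def n_def by (simp add: nth_eq_iff_index_eq)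
  have lL: "l < L" "pr < L" using Pq n2 unfolding P_def l_def pr_def n_def by (auto simp: subset_iff)
  have only: "e = {l, pr}" if e: "e \<in> E" "l \<in> e" for e
  proof -
    obtain x y where xy: "e = {x,y}" "x \<noteq> y" "x < L" "y < L" using F e unfolding forest_def by blast
    obtain w where w: "e = {l, w}" "w \<noteq> l" "w < L" using xy e(2) by auto
    show ?thesis
    proof (cases "w \<in> set q")
      case False
      have "P (q @ [w])" using Pq False w e(1) lastq unfolding P_def
        by (auto intro!: walk_ok_snoc)
      then show ?thesis using maxq by fastforce
    next
      case True
      then obtain k where k: "k < n" "q ! k = w" by (auto simp: in_set_conv_nth n_def)
      have "k \<noteq> n - 1" using k w(2) l_def by auto
      show ?thesis
      proof (cases "k = n - 2")
        case True then show ?thesis using k w pr_def by auto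
      next
        case False
        then have kk: "k + 3 \<le> n" using \<open>k \<noteq> n - 1\<close> k by auto
        define c where "c = drop k q"
        have "3 \<le> length c" "distinct c" "walk_ok E c" using kk dq Pq
          by (auto simp: c_def n_def P_def walk_ok_drop)
        moreover have "last c = l" "hd c = w" using kk k lastq
          by (auto simp: c_def n_def hd_drop_conv_nth)
        ultimately have "has_cycle E" unfolding has_cycle_def using w e(1) by metis
        then show ?thesis using F by (simp add: forest_def)
      qed
    qed
  qed
  have e1': "{l, pr} \<in> E" using e1 by (simp add: insert_commute)
  show ?thesis using e1' lpr lL only by blast
qed

lemma forest_induct[consumes 1, case_names empty leaf]:
  assumes F: "forest L E" and base: "P {}"
    and step: "\<And>E l p. forest L E \<Longrightarrow> {l,p} \<in> E \<Longrightarrow> l \<noteq> p \<Longrightarrow> l < L \<Longrightarrow> p < L \<Longrightarrow>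
        (\<forall>e\<in>E. l \<in> e \<longrightarrow> e = {l,p}) \<Longrightarrow> P (E - {{l,p}}) \<Longrightarrow> P E"
  shows "P E"
proof -
  have "\<forall>E. card E = m \<longrightarrow> forest L E \<longrightarrow> P E" for m
  proof (induction m rule: less_induct)
    case (less m)
    show ?case
    proof (intro allI impI)
      fix E assume cE: "card E = m" and FE: "forest L E"
      show "P E"
      proof (cases "E = {}")
        case True then show ?thesis using base by simp
      next
        case False
        then obtain l p where lp: "{l,p} \<in> E" "l \<noteq> p" "l < L" "p < L" "\<forall>e\<in>E. l \<in> e \<longrightarrow> e = {l,p}"
          using forest_leaf[OF FE] by blast
        have "card (E - {{l,p}}) < m" using cE lp(1) forest_finite(1)[OF FE]
          by (metis card_Diff1_less)
        then have "P (E - {{l,p}})" using less forest_remove[OF FE] by blast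
        then show ?thesis using step[OF FE lp] by blast
      qed
    qed
  qed
  then show ?thesis using F by blast
qed



lemma path_weight_snoc:
  assumes "q \<noteq> []"
  shows "path_weight W (q @ [v]) = path_weight W q + W {last q, v}"
proof -
  have len: "length (q @ [v]) - 1 = Suc (length q - 1)" using assms by (cases q) auto
  have "path_weight W (q @ [v]) = (\<Sum>k<Suc (length q - 1). W {(q @ [v]) ! k, (q @ [v]) ! Suc k})"
    unfolding path_weight_def len ..
  also have "\<dots> = (\<Sum>k<length q - 1. W {(q @ [v]) ! k, (q @ [v]) ! Suc k})
      + W {(q @ [v]) ! (length q - 1), (q @ [v]) ! Suc (length q - 1)}"
    by simp
  also have "(\<Sum>k<length q - 1. W {(q @ [v]) ! k, (q @ [v]) ! Suc k}) = path_weight W q"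
    unfolding path_weight_def by (intro sum.cong) (auto simp: nth_append)
  also have "(q @ [v]) ! (length q - 1) = last q" using assms by (simp add: nth_append last_conv_nth)
  also have "(q @ [v]) ! Suc (length q - 1) = v" using assms by (cases q) (auto simp: nth_append)
  finally show ?thesis .
qed

lemma path_weight_rev: "path_weight W (rev q) = path_weight W q"
proof -
  define m where "m = length q - 1"
  define g where "g k = W {q ! k, q ! Suc k}" for k
  have "path_weight W q = sum g {..<m}" unfolding path_weight_def g_def m_def ..
  also have "\<dots> = (\<Sum>k<m. g (m - Suc k))" by (rule sum.nat_diff_reindex[symmetric])
  also have "\<dots> = path_weight W (rev q)"
    unfolding path_weight_def
  proof (intro sum.cong)
    fix k assume "k \<in> {..<length (rev q) - 1}"
    then have k: "k < m" by (simp add: m_def)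
    then have "rev q ! k = q ! Suc (m - Suc k)" "rev q ! Suc k = q ! (m - Suc k)"
      by (auto simp: rev_nth m_def Suc_diff_Suc)
    then show "g (m - Suc k) = W {rev q ! k, rev q ! Suc k}" unfolding g_def by (simp add: insert_commute)
  qed (simp add: m_def)
  finally show ?thesis by simp
qed

lemma fdist_eq: "uniq E \<Longrightarrow> is_path E q i j \<Longrightarrow> fdist E W i j = path_weight W q"
  unfolding fdist_def uniq_def by (metis (mono_tags, lifting) the_equality)

lemma mask_eq: "uniq E \<Longrightarrow> is_path E q i j \<Longrightarrow> mask a b E W i j = exp (a * path_weight W q + b)"
  unfolding mask_def using fdist_eq by auto

lemma mask_none: "(\<And>q. \<not> is_path E q i j) \<Longrightarrow> mask a b E W i j = 0"
  unfolding mask_def by auto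

lemma mask_diag: "mask a b E W i i = exp b"
proof -
  have "(THE q. is_path E q i i) = [i]"
    using is_path_single is_path_same by blast
  then show ?thesis unfolding mask_def fdist_def path_weight_def using is_path_single by auto
qed

lemma mask_sym: assumes "uniq E" shows "mask a b E W i j = mask a b E W j i"
proof (cases "\<exists>q. is_path E q i j")
  case True
  then obtain q where q: "is_path E q i j" by blast
  then have "is_path E (rev q) j i" by (simp add: is_path_rev)
  then show ?thesis using q assms by (simp add: mask_eq path_weight_rev)
next
  case False
  then have "\<not> is_path E q j i" for q using is_path_rev[of E q i j] False by auto
  then show ?thesis using False by (metis mask_none)
qed

lemma uniq_empty: "uniq {}"
  unfolding uniq_def using is_path_empty by blast

locale leafctx =
  fixes E :: "nat set set" and l p :: nat
  assumes edge: "{l,p} \<in> E" and lp: "l \<noteq> p" and only: "\<And>e. e \<in> E \<Longrightarrow> l \<in> e \<Longrightarrow> e = {l,p}"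
begin

abbreviation "E' \<equiv> E - {{l,p}}"

lemma iso: "e \<in> E' \<Longrightarrow> l \<notin> e"
  using only by blast

lemma noL_path:
  assumes q: "is_path E q i j" and i: "i \<noteq> l" and j: "j \<noteq> l"
  shows "l \<notin> set q"
proof
  assume "l \<in> set q"
  then obtain k where k: "k < length q" "q ! k = l" by (auto simp: in_set_conv_nth)
  have qq: "q \<noteq> []" "hd q = i" "last q = j" "distinct q" "walk_ok E q" using q by (auto simp: is_path_def)
  have "k \<noteq> 0"
  proof
    assume "k = 0" then have "hd q = l" using k qq(1) by (simp add: hd_conv_nth)
    then show False using qq(2) i by simp
  qed
  moreover have "k \<noteq> length q - 1" using k qq j by (auto simp: last_conv_nth)
  ultimately have k2: "Suc (k - 1) = k" "Suc k < length q" using k by auto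
  have "Suc (k - 1) < length q" using k2 by simp
  then have "{q ! (k - 1), q ! Suc (k - 1)} \<in> E" using qq(5) unfolding walk_ok_def by blast
  then have "{q ! (k - 1), l} \<in> E" using k2 k by simp
  then have "{q ! (k - 1), l} = {l, p}" using only by blast
  moreover have "q ! (k - 1) \<noteq> l"
  proof -
    have "k - 1 < length q" "k - 1 \<noteq> k" using k k2 by auto
    then show ?thesis using nth_eq_iff_index_eq[OF qq(4) _ k(1)] k(2) by auto
  qed
  ultimately have a1: "q ! (k - 1) = p" by (auto simp: doubleton_eq_iff)
  have "{q ! k, q ! Suc k} \<in> E" using qq(5) k2 unfolding walk_ok_def by blast
  then have "{l, q ! Suc k} \<in> E" using k by simp
  then have "{l, q ! Suc k} = {l, p}" using only by blast
  moreover have "q ! Suc k \<noteq> l"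
    using nth_eq_iff_index_eq[OF qq(4) k2(2) k(1)] k(2) by auto
  ultimately have a2: "q ! Suc k = p" by (auto simp: doubleton_eq_iff)
  have "k - 1 < length q" using k by auto
  then have "k - 1 = Suc k" using a1 a2 nth_eq_iff_index_eq[OF qq(4) _ k2(2)] by auto
  then show False by simp
qed

lemma P1:
  assumes i: "i \<noteq> l" and j: "j \<noteq> l"
  shows "is_path E q i j = is_path E' q i j"
proof
  assume q: "is_path E q i j"
  have nl: "l \<notin> set q" using noL_path[OF q i j] .
  have "walk_ok E' q" unfolding walk_ok_def
  proof (intro allI impI)
    fix k assume k: "Suc k < length q"
    then have "{q ! k, q ! Suc k} \<in> E" using q unfolding is_path_def walk_ok_def by blast
    moreover have "l \<notin> {q ! k, q ! Suc k}" using nl k by auto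
    ultimately show "{q ! k, q ! Suc k} \<in> E'" by auto
  qed
  then show "is_path E' q i j" using q unfolding is_path_def by auto
next
  assume "is_path E' q i j"
  then show "is_path E q i j" unfolding is_path_def using walk_ok_mono by blast
qed

lemma noE'_l:
  assumes q: "is_path E' q i l" and i: "i \<noteq> l"
  shows False
proof -
  have qq: "q \<noteq> []" "hd q = i" "last q = l" "walk_ok E' q" using q by (auto simp: is_path_def)
  have "length q \<noteq> 1" using qq i by (cases q) auto
  then have "2 \<le> length q" using qq(1) by (cases q) (auto simp: Suc_le_eq)
  moreover have "l \<in> set q" using qq by auto
  ultimately show False using walk_ok_mem[OF qq(4)] iso by blast
qed

lemma l_notin_E'path:
  assumes q: "is_path E' q i j" and i: "i \<noteq> l"
  shows "l \<notin> set q"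
proof
  assume l: "l \<in> set q"
  have qq: "q \<noteq> []" "hd q = i" "walk_ok E' q" using q by (auto simp: is_path_def)
  have "length q \<noteq> 1" using qq i l by (cases q) auto
  then have "2 \<le> length q" using qq(1) by (cases q) (auto simp: Suc_le_eq)
  then show False using walk_ok_mem[OF qq(3) _ l] iso by blast
qed

lemma P2a:
  assumes q: "is_path E' q i p" and i: "i \<noteq> l"
  shows "is_path E (q @ [l]) i l"
proof -
  have nl: "l \<notin> set q" using l_notin_E'path[OF q i] .
  have qq: "q \<noteq> []" "hd q = i" "last q = p" "distinct q" "walk_ok E' q" using q by (auto simp: is_path_def)
  have "walk_ok E q" using qq(5) walk_ok_mono by blast
  moreover have "{last q, l} \<in> E" using qq(3) edge by (simp add: insert_commute)
  ultimately have "walk_ok E (q @ [l])" using qq(1) walk_ok_snoc by blast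
  then show ?thesis using qq nl unfolding is_path_def by auto
qed

lemma P2b:
  assumes q: "is_path E q i l" and i: "i \<noteq> l"
  shows "q = butlast q @ [l] \<and> is_path E' (butlast q) i p"
proof -
  have qq: "q \<noteq> []" "hd q = i" "last q = l" "distinct q" "walk_ok E q" using q by (auto simp: is_path_def)
  have "length q \<noteq> 1" using qq i by (cases q) auto
  then have len: "2 \<le> length q" using qq(1) by (cases q) (auto simp: Suc_le_eq)
  define q' where "q' = butlast q"
  have qdec: "q = q' @ [l]" using qq(1,3) append_butlast_last_id[OF qq(1)] by (simp add: q'_def)
  have q'ne: "q' \<noteq> []" using len qdec by (cases q') auto
  have hd': "hd q' = i" using qq(2) qdec q'ne by simp
  have d': "distinct q'" "l \<notin> set q'" using qq(4) qdec by auto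
  have w': "walk_ok E q'" using walk_ok_take[OF qq(5), of "length q - 1"] by (simp add: q'_def butlast_conv_take)
  have "{q ! (length q - 2), q ! Suc (length q - 2)} \<in> E"
    using qq(5) len unfolding walk_ok_def by auto
  moreover have "q ! (length q - 2) = last q'" using qdec q'ne
    by (simp add: nth_append last_conv_nth)
  moreover have "q ! Suc (length q - 2) = l" using qdec q'ne by (simp add: nth_append)
  ultimately have "{last q', l} \<in> E" by simp
  then have "{last q', l} = {l, p}" using only by blast
  moreover have "last q' \<noteq> l" using d'(2) q'ne by auto
  ultimately have lq': "last q' = p" by (auto simp: doubleton_eq_iff)
  have "is_path E q' i p" using q'ne hd' lq' d' w' by (simp add: is_path_def)
  then have "is_path E' q' i p" using P1[OF i] lp by simp
  then show ?thesis using qdec unfolding q'_def[symmetric] by blast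
qed

lemma uniq_step:
  assumes u: "uniq E'" shows "uniq E"
proof -
  have toL: "q1 = q2" if "is_path E q1 i l" "is_path E q2 i l" "i \<noteq> l" for q1 q2 i
  proof -
    have "butlast q1 = butlast q2" using P2b[OF that(1,3)] P2b[OF that(2,3)] u unfolding uniq_def by blast
    then show ?thesis using P2b[OF that(1,3)] P2b[OF that(2,3)] by metis
  qed
  show ?thesis unfolding uniq_def
  proof (intro allI impI)
    fix q1 q2 i j assume q1: "is_path E q1 i j" and q2: "is_path E q2 i j"
    show "q1 = q2"
    proof (cases "i = l")
      case True
      show ?thesis
      proof (cases "j = l")
        case True
        then show ?thesis using q1 q2 \<open>i = l\<close> is_path_same by blast
      next
        case False
        have "is_path E (rev q1) j l" "is_path E (rev q2) j l" using q1 q2 True by (simp_all add: is_path_rev)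
        then have "rev q1 = rev q2" using toL False by blast
        then show ?thesis by simp
      qed
    next
      case False
      show ?thesis
      proof (cases "j = l")
        case True
        then show ?thesis using toL q1 q2 False by blast
      next
        case False
        then show ?thesis using q1 q2 \<open>i \<noteq> l\<close> P1 u unfolding uniq_def by blast
      qed
    qed
  qed
qed

context
  fixes a b :: real and W :: "nat set \<Rightarrow> real"
  assumes uE: "uniq E" and uE': "uniq E'"
begin

lemma mA: "i \<noteq> l \<Longrightarrow> j \<noteq> l \<Longrightarrow> mask a b E W i j = mask a b E' W i j"
  unfolding mask_def fdist_def by (simp add: P1)

lemma mB: assumes i: "i \<noteq> l"
  shows "mask a b E W i l = exp (a * W {l,p}) * mask a b E' W i p"
proof (cases "\<exists>q. is_path E' q i p")
  case True
  then obtain q where q: "is_path E' q i p" by blast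
  have qq: "q \<noteq> []" "last q = p" using q by (auto simp: is_path_def)
  have "mask a b E W i l = exp (a * path_weight W (q @ [l]) + b)"
    using mask_eq[OF uE P2a[OF q i]] .
  also have "\<dots> = exp (a * W {l,p}) * exp (a * path_weight W q + b)"
    using qq by (simp add: path_weight_snoc insert_commute distrib_left exp_add[symmetric] algebra_simps)
  also have "exp (a * path_weight W q + b) = mask a b E' W i p" using mask_eq[OF uE' q] by simp
  finally show ?thesis .
next
  case False
  then have "\<not> is_path E q i l" for q using P2b i by blast
  then show ?thesis using False by (simp add: mask_none)
qed

lemma mC: "i \<noteq> l \<Longrightarrow> mask a b E' W i l = 0"
  using noE'_l by (metis mask_none)

lemma mD: assumes j: "j \<noteq> l"
  shows "mask a b E W l j = exp (a * W {l,p}) * mask a b E' W p j"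
  using mB[OF j] mask_sym[OF uE] mask_sym[OF uE'] by metis

end

end

lemma forest_uniq: "forest L E \<Longrightarrow> uniq E"
proof (induction rule: forest_induct)
  case empty then show ?case by (rule uniq_empty)
next
  case (leaf E l p)
  interpret leafctx E l p
  proof
    show "{l, p} \<in> E" by (rule leaf.hyps(2))
    show "l \<noteq> p" by (rule leaf.hyps(3))
    show "e \<in> E \<Longrightarrow> l \<in> e \<Longrightarrow> e = {l, p}" for e using leaf.hyps(6) by blast
  qed
  show ?case by (rule uniq_step) (rule leaf.IH)
qed



definition step :: "(nat \<Rightarrow> real) \<Rightarrow> (nat set \<Rightarrow> real) \<Rightarrow> real list \<Rightarrow> instr \<Rightarrow> real list" where
  "step x W rs ins = rs @ [exec_instr x W rs ins]"

lemma reg_app: "reg (xs @ ys) k = (if k < length xs then reg xs k else reg ys (k - length xs))"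
  unfolding reg_def by (auto simp: nth_append)

lemma reg_Cons: "reg (v # ys) k = (if k = 0 then v else reg ys (k - 1))"
  unfolding reg_def by (cases k) auto

lemma reg_Nil: "reg [] k = 0"
  unfolding reg_def by simp

lemma foldl_step_ex: "\<exists>ys. foldl (step x W) rs Q = rs @ ys \<and> length ys = length Q"
proof (induction Q arbitrary: rs)
  case Nil then show ?case by simp
next
  case (Cons q Q)
  obtain ys where "foldl (step x W) (step x W rs q) Q = step x W rs q @ ys" "length ys = length Q"
    using Cons by blast
  moreover have "step x W rs q = rs @ [exec_instr x W rs q]" by (simp add: step_def)
  ultimately have "foldl (step x W) rs (q # Q) = rs @ (exec_instr x W rs q # ys)"
    "length (exec_instr x W rs q # ys) = length (q # Q)" by simp_all
  then show ?case by blast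
qed

lemma foldl_step_nth:
  "foldl (step x W) rs Q = rs @ ys \<Longrightarrow> k < length Q \<Longrightarrow> ys ! k = exec_instr x W (rs @ take k ys) (Q ! k)"
proof (induction Q arbitrary: rs ys k)
  case Nil then show ?case by simp
next
  case (Cons q Q)
  obtain ys' where ys': "foldl (step x W) (step x W rs q) Q = step x W rs q @ ys'"
    using foldl_step_ex by blast
  have st: "step x W rs q = rs @ [exec_instr x W rs q]" by (simp add: step_def)
  have ys: "ys = exec_instr x W rs q # ys'" using Cons.prems(1) ys' by (simp add: st)
  show ?case
  proof (cases k)
    case 0 then show ?thesis using ys by simp
  next
    case (Suc k')
    have "ys' ! k' = exec_instr x W (step x W rs q @ take k' ys') (Q ! k')"
      using Cons.IH[OF ys'] Cons.prems(2) Suc by simp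
    then show ?thesis using ys Suc by (simp add: st)
  qed
qed

definition frag_ok :: "real \<Rightarrow> real \<Rightarrow> nat set set \<Rightarrow> nat \<Rightarrow> nat \<Rightarrow> (nat \<Rightarrow> nat) \<Rightarrow> instr list \<Rightarrow> nat list \<Rightarrow> bool" where
  "frag_ok a b E L n inp Q outs \<longleftrightarrow> length outs = L \<and> (\<forall>i<L. outs ! i < n + length Q) \<and>
     (\<forall>x W rs. length rs = n \<longrightarrow> (\<forall>i<L. reg (foldl (step x W) rs Q) (outs ! i) =
        (\<Sum>j<L. mask a b E W i j * reg rs (inp j))))"

lemma base_frag:
  assumes hinp: "\<forall>j<L. inp j < n"
  shows "\<exists>Q outs. length Q \<le> L + 1 + 13 * card (\<Union>{}) \<and> frag_ok a b {} L n inp Q outs"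
proof -
  define Q where "Q = Const (exp b) # map (\<lambda>i. Mul n (inp i)) [0..<L]"
  define outs where "outs = map (\<lambda>i. n + 1 + i) [0..<L]"
  have "frag_ok a b {} L n inp Q outs"
    unfolding frag_ok_def
  proof (intro conjI allI impI)
    show "length outs = L" by (simp add: outs_def)
    fix i assume "i < L" then show "outs ! i < n + length Q" by (simp add: outs_def Q_def)
  next
    fix x :: "nat \<Rightarrow> real" and W :: "nat set \<Rightarrow> real" and rs :: "real list" and i
    assume rs: "length rs = n" and i: "i < L"
    obtain ys where ys: "foldl (step x W) rs Q = rs @ ys" "length ys = length Q"
      using foldl_step_ex by blast
    have lQ: "length Q = Suc L" by (simp add: Q_def)
    have y0: "ys ! 0 = exp b" using foldl_step_nth[OF ys(1), of 0] by (simp add: Q_def)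
    have "ys ! Suc i = exec_instr x W (rs @ take (Suc i) ys) (Mul n (inp i))"
      using foldl_step_nth[OF ys(1), of "Suc i"] i by (simp add: Q_def lQ)
    also have "\<dots> = ys ! 0 * reg rs (inp i)"
    proof -
      have "reg (take (Suc i) ys) 0 = ys ! 0" using ys(2) lQ by (simp add: reg_def)
      moreover have "inp i < length rs" using rs hinp i by simp
      ultimately show ?thesis using rs by (simp add: reg_app)
    qed
    finally have yi: "ys ! Suc i = exp b * reg rs (inp i)" using y0 by simp
    have lhs: "reg (foldl (step x W) rs Q) (outs ! i) = exp b * reg rs (inp i)"
    proof -
      have "outs ! i = n + Suc i" using i by (simp add: outs_def)
      moreover have "reg ys (Suc i) = ys ! Suc i" using ys(2) lQ i by (simp add: reg_def)
      ultimately show ?thesis using ys(1) rs yi by (simp add: reg_app)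
    qed
    have m: "mask a b {} W i j = (if j = i then exp b else 0)" for j
    proof (cases "j = i")
      case True then show ?thesis by (simp add: mask_diag)
    next
      case False
      then have "\<not> is_path {} q i j" for q using is_path_empty by blast
      then show ?thesis using False by (simp add: mask_none)
    qed
    have "(\<Sum>j<L. mask a b {} W i j * reg rs (inp j)) = (\<Sum>j<L. if j = i then exp b * reg rs (inp j) else 0)"
      by (rule sum.cong) (auto simp: m)
    also have "\<dots> = exp b * reg rs (inp i)" using i by simp
    finally show "reg (foldl (step x W) rs Q) (outs ! i) = (\<Sum>j<L. mask a b {} W i j * reg rs (inp j))"
      using lhs by simp
  qed
  moreover have "length Q \<le> L + 1 + 13 * card (\<Union>{})" by (simp add: Q_def)
  ultimately show ?thesis by blast
qed



lemma leaf_frag: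
  assumes F: "forest L E" and e: "{l,p} \<in> E" "l \<noteq> p" "l < L" "p < L"
    and only: "\<forall>e\<in>E. l \<in> e \<longrightarrow> e = {l,p}"
    and IH: "\<forall>n inp. (\<forall>j<L. inp j < n) \<longrightarrow> (\<exists>Q outs. length Q \<le> L + 1 + 13 * card (\<Union>(E - {{l,p}}))
               \<and> frag_ok a b (E - {{l,p}}) L n inp Q outs)"
    and hinp: "\<forall>j<L. inp j < n"
  shows "\<exists>Q outs. length Q \<le> L + 1 + 13 * card (\<Union>E) \<and> frag_ok a b E L n inp Q outs"
proof -
  interpret leafctx E l p
  proof
    show "{l, p} \<in> E" by (rule e(1))
    show "l \<noteq> p" by (rule e(2))
    show "e \<in> E \<Longrightarrow> l \<in> e \<Longrightarrow> e = {l, p}" for e using only by blast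
  qed
  have F': "forest L E'" using forest_remove[OF F] .
  have uE: "uniq E" using forest_uniq[OF F] .
  have uE': "uniq E'" using forest_uniq[OF F'] .
  define inp' where "inp' = inp(p := n + 5)"
  have hinp': "\<forall>j<L. inp' j < n + 6" using hinp by (auto simp: inp'_def)
  obtain Q' outs' where Q': "length Q' \<le> L + 1 + 13 * card (\<Union>E')" "frag_ok a b E' L (n + 6) inp' Q' outs'"
    using IH hinp' by blast
  have card: "card (\<Union>E') < card (\<Union>E)"
  proof (rule psubset_card_mono)
    show "finite (\<Union>E)" using forest_finite(2)[OF F] finite_subset by blast
    have "l \<in> \<Union>E" using e(1) by blast
    moreover have "l \<notin> \<Union>E'" using iso by blast
    ultimately show "\<Union>E' \<subset> \<Union>E" by blast
  qed
  define m where "m = n + 6 + length Q'"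
  define pre where "pre = [InW {l,p}, Const a, Mul (n+1) n, Ex (n+2), Mul (n+3) (inp l), Add (inp p) (n+4)]"
  define post where "post = [Const (exp b), Mul m (inp l), Mul (n+3) (outs' ! p), Mul (n+3) (n+4),
      Mul m (m+3), Add (m+1) (m+2), Sub (m+5) (m+4)]"
  define Q where "Q = pre @ Q' @ post"
  define outs where "outs = outs'[l := m + 6]"
  have lQ: "length Q = length Q' + 13" by (simp add: Q_def pre_def post_def)
  have lo': "length outs' = L" "\<forall>i<L. outs' ! i < n + 6 + length Q'" using Q'(2) by (auto simp: frag_ok_def)
  have "frag_ok a b E L n inp Q outs"
    unfolding frag_ok_def
  proof (intro conjI allI impI)
    show "length outs = L" using lo' by (simp add: outs_def)
    fix i assume i: "i < L"
    show "outs ! i < n + length Q" using lo' i lQ by (cases "i = l") (auto simp: outs_def m_def)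
  next
    fix x :: "nat \<Rightarrow> real" and W :: "nat set \<Rightarrow> real" and rs :: "real list" and i
    assume rs: "length rs = n" and i: "i < L"
    define X where "X j = reg rs (inp j)" for j
    define c where "c = exp (a * W {l,p})"
    define M where "M i j = mask a b E W i j" for i j
    define M' where "M' i j = mask a b E' W i j" for i j
    have il: "inp l < n" "inp p < n" using hinp e by auto
    have st: "step x W rs ins = rs @ [exec_instr x W rs ins]" for rs ins by (simp add: step_def)
    define rs1 where "rs1 = rs @ [W {l,p}, a, a * W {l,p}, c, c * X l, X p + c * X l]"
    have r1: "foldl (step x W) rs pre = rs1"
      using il rs by (simp add: pre_def rs1_def st reg_app reg_Cons reg_Nil c_def X_def)
    have lr1: "length rs1 = n + 6" using rs by (simp add: rs1_def)
    have Y: "reg rs1 (inp' j) = X j + (if j = p then c * X l else 0)" if "j < L" for j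
      using that hinp rs by (auto simp: inp'_def rs1_def reg_app reg_Cons X_def)
    obtain ys2 where ys2: "foldl (step x W) rs1 Q' = rs1 @ ys2" "length ys2 = length Q'"
      using foldl_step_ex by blast
    define rs2 where "rs2 = rs1 @ ys2"
    have lr2: "length rs2 = m" using lr1 ys2 by (simp add: rs2_def m_def)
    have IHv: "reg rs2 (outs' ! j) = (\<Sum>k<L. M' j k * reg rs1 (inp' k))" if "j < L" for j
      using Q'(2) lr1 that ys2 unfolding frag_ok_def rs2_def M'_def by metis
    have r2: "reg rs2 k = reg rs1 k" if "k < n + 6" for k
      using that lr1 by (simp add: rs2_def reg_app)
    have r2a: "reg rs2 (inp l) = X l" "reg rs2 (n+3) = c" "reg rs2 (n+4) = c * X l"
      using r2 il rs by (auto simp: rs1_def reg_app reg_Cons X_def)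
    define Ov where "Ov = reg rs2 (outs' ! p)"
    have op: "outs' ! p < m" using lo' e by (simp add: m_def)
    define rs3 where "rs3 = rs2 @ [exp b, exp b * X l, c * Ov, c * (c * X l), exp b * (c * (c * X l)),
        exp b * X l + c * Ov, (exp b * X l + c * Ov) - exp b * (c * (c * X l))]"
    have nm: "inp l < m" "n + 3 < m" "n + 4 < m" using il by (auto simp: m_def)
    have r3: "foldl (step x W) rs2 post = rs3"
      using lr2 op nm r2a by (simp add: post_def rs3_def st reg_app reg_Cons reg_Nil Ov_def)
    have fQ: "foldl (step x W) rs Q = rs3"
      using r1 ys2 r3 by (simp add: Q_def rs2_def)
    have S1: "(\<Sum>k<L. M' j k * reg rs1 (inp' k)) = (\<Sum>k<L. M' j k * X k) + M' j p * (c * X l)" for j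
    proof -
      have "(\<Sum>k<L. M' j k * reg rs1 (inp' k)) = (\<Sum>k<L. M' j k * X k + (if k = p then M' j p * (c * X l) else 0))"
        by (rule sum.cong) (auto simp: Y algebra_simps)
      also have "\<dots> = (\<Sum>k<L. M' j k * X k) + M' j p * (c * X l)"
        using e(4) by (simp add: sum.distrib)
      finally show ?thesis .
    qed
    show "reg (foldl (step x W) rs Q) (outs ! i) = (\<Sum>j<L. mask a b E W i j * reg rs (inp j))"
    proof (cases "i = l")
      case True
      have lhs: "reg (foldl (step x W) rs Q) (outs ! i) = (exp b * X l + c * Ov) - exp b * (c * (c * X l))"
        using True lo' e lr2 by (simp add: fQ outs_def rs3_def reg_app reg_Cons)
      have Ov: "Ov = (\<Sum>k<L. M' p k * X k) + exp b * (c * X l)"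
        using IHv[OF e(4)] S1[of p] by (simp add: Ov_def M'_def mask_diag)
      have "(\<Sum>j<L. M l j * X j) = (\<Sum>j<L. c * (M' p j * X j) + (if j = l then exp b * X l else 0))"
      proof (rule sum.cong)
        fix j assume "j \<in> {..<L}"
        show "M l j * X j = c * (M' p j * X j) + (if j = l then exp b * X l else 0)"
        proof (cases "j = l")
          case True
          then show ?thesis using mC[OF uE uE', of p a b W] e(2) by (simp add: M_def M'_def mask_diag)
        next
          case False
          then show ?thesis using mD[OF uE uE' False, of a b W] by (simp add: M_def M'_def c_def)
        qed
      qed simp
      also have "\<dots> = c * (\<Sum>j<L. M' p j * X j) + exp b * X l"
        using e(3) by (simp add: sum.distrib sum_distrib_left)
      finally show ?thesis using lhs Ov True by (simp add: M_def X_def algebra_simps)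
    next
      case False
      have lhs: "reg (foldl (step x W) rs Q) (outs ! i) = reg rs2 (outs' ! i)"
        using False lo' i lr2 by (simp add: fQ outs_def rs3_def reg_app m_def)
      have "(\<Sum>j<L. M i j * X j) = (\<Sum>j<L. M' i j * X j + (if j = l then M' i p * (c * X l) else 0))"
      proof (rule sum.cong)
        fix j assume "j \<in> {..<L}"
        show "M i j * X j = M' i j * X j + (if j = l then M' i p * (c * X l) else 0)"
        proof (cases "j = l")
          case True
          then show ?thesis using mC[OF uE uE' False, of a b W] mB[OF uE uE' False, of a b W]
            by (simp add: M_def M'_def c_def)
        next
          case jl: False
          then show ?thesis using mA[OF uE uE' False jl, of a b W] by (simp add: M_def M'_def)
        qed
      qed simp
      also have "\<dots> = (\<Sum>j<L. M' i j * X j) + M' i p * (c * X l)"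
        using e(3) by (simp add: sum.distrib)
      finally show ?thesis using lhs IHv[OF i] S1[of i] by (simp add: M_def X_def)
    qed
  qed
  moreover have "length Q \<le> L + 1 + 13 * card (\<Union>E)" using lQ Q'(1) card by simp
  ultimately show ?thesis by blast
qed



lemma main_frag:
  assumes "forest L E"
  shows "\<forall>n inp. (\<forall>j<L. inp j < n) \<longrightarrow> (\<exists>Q outs. length Q \<le> L + 1 + 13 * card (\<Union>E) \<and> frag_ok a b E L n inp Q outs)"
  using assms
proof (induction rule: forest_induct)
  case empty then show ?case using base_frag by blast
next
  case (leaf E l p)
  show ?case
  proof (intro allI impI)
    fix n inp assume "\<forall>j<L. inp j < (n::nat)"
    then show "\<exists>Q outs. length Q \<le> L + 1 + 13 * card (\<Union>E) \<and> frag_ok a b E L n inp Q outs"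
      using leaf_frag[OF leaf.hyps(1-6) leaf.IH] by blast
  qed
qed

lemma foldl_InX: "foldl (step x W) [] (map InX [0..<L]) = map x [0..<L]"
  by (induction L) (simp_all add: step_def)

theorem lemma3p5:
  fixes a b :: real
  shows "\<exists>C::nat. \<forall>L E. forest L E \<longrightarrow>
           (\<exists>P outs. length P \<le> C * L \<and> computes_mask_mult a b L E P outs)"
proof (intro exI[of _ 16] allI impI)
  fix L E assume F: "forest L E"
  show "\<exists>P outs. length P \<le> 16 * L \<and> computes_mask_mult a b L E P outs"
  proof (cases "L = 0")
    case True
    then have "computes_mask_mult a b L E [] []" by (simp add: computes_mask_mult_def)
    then show ?thesis using True by auto
  next
    case False
    obtain Q outs where Q: "length Q \<le> L + 1 + 13 * card (\<Union>E)" "frag_ok a b E L L id Q outs"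
      using main_frag[OF F, of a b] by (metis id_apply)
    have cE: "card (\<Union>E) \<le> L" using card_mono[OF _ forest_finite(2)[OF F]] by simp
    define P where "P = map InX [0..<L] @ Q"
    have "length P \<le> 16 * L" using Q(1) cE False by (simp add: P_def)
    moreover have "computes_mask_mult a b L E P outs"
      unfolding computes_mask_mult_def
    proof (intro conjI allI impI)
      show "length outs = L" using Q(2) by (simp add: frag_ok_def)
      fix W x i assume i: "i < (L::nat)"
      have run: "run P x W = foldl (step x W) (map x [0..<L]) Q"
      proof -
        have "(\<lambda>rs ins. rs @ [exec_instr x W rs ins]) = step x W" by (intro ext) (simp add: step_def)
        then show ?thesis by (simp add: run_def P_def foldl_InX)
      qed
      have rg: "reg (map x [0..<L]) j = x j" if "j < L" for j using that by (simp add: reg_def)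
      have "reg (run P x W) (outs ! i) = (\<Sum>j<L. mask a b E W i j * reg (map x [0..<L]) (id j))"
        using Q(2) i unfolding frag_ok_def run by simp
      also have "\<dots> = mask_mult a b L E W x i"
        unfolding mask_mult_def by (rule sum.cong) (auto simp: rg)
      finally show "reg (run P x W) (outs ! i) = mask_mult a b L E W x i" .
    qed
    ultimately show ?thesis by blast
  qed
qed

end
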